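(* Let $\ket{\varphi_0}=\xi_0\ket{00}+\xi_1\ket{01}+\xi_2\ket{10}+\xi_3\ket{11}$ be a 2-qubit state (unit vector in $\mathbb{C}^4$) and let $A=\begin{pmatrix}\xi_0&\xi_1\\\xi_2&\xi_3\end{pmatrix}$. (1) If $\det A=0$, let $(v_1,v_2)\neq(0,0)$ be a vector such that both columns of $A$ are multiples of $(v_1,v_2)$, let $K_1=U(\bar v_1,\bar v_2)$; then $(K_1\otimes I)\ket{\varphi_0}=\eta_0\ket{00}+\eta_1\ket{01}$ for some $\eta_0,\eta_1\in\mathbb{C}$, and with $K_2=U(\bar\eta_0,-\eta_1)^T$ we have $(K_1\otimes K_2)\ket{\varphi_0}=\ket{00}$. (2) If $\det A\neq 0$, let $W_1=R_1(A)^T$. Then $\det$ of the matrix associated to the state $cz\,(I\otimes W_1)\ket{\varphi_0}$ is zero, and if $K_1,K_2$ are the matrices constructed as in part (1) from the state $cz\,(I\otimes W_1)\ket{\varphi_0}$ in place of $\ket{\varphi_0}$, then $(K_1\otimes K_2)\,cz\,(I\otimes W_1)\ket{\varphi_0}=\ket{00}$.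
   Context: For complex $(x,y)\neq(0,0)$, $U(x,y)=\frac{1}{\sqrt{|x|^2+|y|^2}}\begin{pmatrix}x&y\\-\bar y&\bar x\end{pmatrix}$. The matrix associated to a 2-qubit state $t_{00}\ket{00}+t_{01}\ket{01}+t_{10}\ket{10}+t_{11}\ket{11}$ is $\begin{pmatrix}t_{00}&t_{01}\\t_{10}&t_{11}\end{pmatrix}$. $cz=\mathrm{diag}(1,1,1,-1)$ in the basis $\ket{00},\ket{01},\ket{10},\ket{11}$, and $I$ is the $2\times2$ identity. For a nonsingular $A=\begin{pmatrix}a&b\\c&d\end{pmatrix}$, $R_1(A)=U(x,y)$ with $x=d-bk$, $y=\bar c-\bar a\bar k$, where, setting $\beta=a\bar c+b\bar d$, $k=\sqrt{(|c|^2+|d|^2)/(|a|^2+|b|^2)}$ if $\beta=0$ and $k=-\sqrt{(|c|^2+|d|^2)/(|\beta|^2(|a|^2+|b|^2))}\,\bar\beta$ if $\beta\neq0$. $M^T$ denotes the transpose of $M$. *)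

theory Defs
  imports "HOL-Analysis.Analysis"
begin

text \<open>Two-qubit states are vectors indexed by 2 \<times> 2, the index (i,j) standing for |ij>.\<close>

definition mat2 :: "complex \<Rightarrow> complex \<Rightarrow> complex \<Rightarrow> complex \<Rightarrow> complex^2^2" where
  "mat2 a b c d = (\<chi> i j. if i = 0 then (if j = 0 then a else b) else (if j = 0 then c else d))"

definition U :: "complex \<Rightarrow> complex \<Rightarrow> complex^2^2" where
  "U x y = (let s = complex_of_real (1 / sqrt ((cmod x)\<^sup>2 + (cmod y)\<^sup>2))
            in mat2 (s * x) (s * y) (s * (- cnj y)) (s * cnj x))"

definition kron :: "complex^2^2 \<Rightarrow> complex^2^2 \<Rightarrow> complex^(2\<times>2)^(2\<times>2)" where
  "kron A B = (\<chi> p q. A $ fst p $ fst q * B $ snd p $ snd q)"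

definition ket :: "2 \<Rightarrow> 2 \<Rightarrow> complex^(2\<times>2)" where
  "ket i j = axis (i, j) 1"

definition assoc_mat :: "complex^(2\<times>2) \<Rightarrow> complex^2^2" where
  "assoc_mat t = (\<chi> i j. t $ (i, j))"

definition cz :: "complex^(2\<times>2)^(2\<times>2)" where
  "cz = (\<chi> p q. if p = q then (if p = (1, 1) then -1 else 1) else 0)"

definition R1 :: "complex^2^2 \<Rightarrow> complex^2^2" where
  "R1 A = (let a = A $ 0 $ 0; b = A $ 0 $ 1; c = A $ 1 $ 0; d = A $ 1 $ 1;
              \<beta> = a * cnj c + b * cnj d;
              k = (if \<beta> = 0
                   then complex_of_real (sqrt (((cmod c)\<^sup>2 + (cmod d)\<^sup>2) / ((cmod a)\<^sup>2 + (cmod b)\<^sup>2)))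
                   else - complex_of_real (sqrt (((cmod c)\<^sup>2 + (cmod d)\<^sup>2)
                              / ((cmod \<beta>)\<^sup>2 * ((cmod a)\<^sup>2 + (cmod b)\<^sup>2)))) * cnj \<beta>);
              x = d - b * k;
              y = cnj c - cnj a * cnj k
          in U x y)"

definition cols_multiple_of :: "complex^2^2 \<Rightarrow> complex \<Rightarrow> complex \<Rightarrow> bool" where
  "cols_multiple_of A v1 v2 = (\<forall>j. \<exists>c. A $ 0 $ j = c * v1 \<and> A $ 1 $ j = c * v2)"

definition part1_conclusion :: "complex^(2\<times>2) \<Rightarrow> bool" where
  "part1_conclusion \<phi> =
     (\<forall>v1 v2. (v1, v2) \<noteq> (0, 0) \<and> cols_multiple_of (assoc_mat \<phi>) v1 v2 \<longrightarrow>
        (let K1 = U (cnj v1) (cnj v2) in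
          \<exists>\<eta>0 \<eta>1. kron K1 (mat 1) *v \<phi> = \<eta>0 *s ket 0 0 + \<eta>1 *s ket 0 1 \<and>
                   kron K1 (transpose (U (cnj \<eta>0) (- \<eta>1))) *v \<phi> = ket 0 0))"

end

theory Submission
  imports Defs
begin

lemma UNIV2: "(UNIV::2 set) = {0,1}"
proof -
  have h: "(2::2) = 0" by simp
  show ?thesis using UNIV_2 unfolding h by (simp add: insert_commute)
qed

lemma sum2: "(\<Sum>i\<in>(UNIV::2 set). f i) = f 0 + f 1"
  by (simp add: UNIV2)

lemma sum22: "(\<Sum>p\<in>(UNIV::(2\<times>2) set). f p) = f (0,0) + f (0,1) + f (1,0) + f (1,1)"
proof -
  have "(\<Sum>p\<in>(UNIV::(2\<times>2) set). f p) = (\<Sum>p\<in>(UNIV::2 set) \<times> (UNIV::2 set). f p)"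
    by (simp add: UNIV_Times_UNIV)
  also have "\<dots> = (\<Sum>i\<in>(UNIV::2 set). \<Sum>j\<in>(UNIV::2 set). f (i,j))"
    by (simp add: sum.cartesian_product)
  also have "\<dots> = f (0,0) + f (0,1) + (f (1,0) + f (1,1))" by (simp add: sum2)
  finally show ?thesis by (simp only: add.assoc)
qed

lemma cases2: "(i::2) = 0 \<or> i = 1"
  using UNIV2 by blast

lemma all2: "(\<forall>i::2. P i) \<longleftrightarrow> P 0 \<and> P 1"
  by (metis UNIV2 UNIV_I insertE singletonD)

lemma vec22_eq: "(v::'a^(2\<times>2)) = w \<longleftrightarrow>
   v$(0,0) = w$(0,0) \<and> v$(0,1) = w$(0,1) \<and> v$(1,0) = w$(1,0) \<and> v$(1,1) = w$(1,1)"
  by (auto simp: vec_eq_iff all2)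

lemma kron_mv: "(kron A B *v v) $ (i,j) = A$i$0*B$j$0* v$(0,0) + A$i$0*B$j$1* v$(0,1)
   + A$i$1*B$j$0* v$(1,0) + A$i$1*B$j$1* v$(1,1)"
  by (simp add: kron_def matrix_vector_mult_def sum22)

lemma cz_mv: "(cz *v v) $ (i,j) = (if (i,j) = (1,1) then - v$(i,j) else v$(i,j))"
  using cases2[of i] cases2[of j] by (auto simp add: cz_def matrix_vector_mult_def sum22)

lemma ket_c: "ket i j $ (k,l) = (if (k,l) = (i,j) then 1 else 0)"
  by (auto simp: ket_def axis_def)

lemma mat2_c: "mat2 a b c d $ 0 $ 0 = a" "mat2 a b c d $ 0 $ 1 = b"
  "mat2 a b c d $ 1 $ 0 = c" "mat2 a b c d $ 1 $ 1 = d"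
  by (simp_all add: mat2_def)

lemma det22: "det (A::complex^2^2) = A$0$0*A$1$1 - A$0$1*A$1$0"
proof -
  have h: "(2::2) = 0" by simp
  have "det A = A$1$1*A$0$0 - A$1$0*A$0$1" using det_2[of A] by (simp only: h)
  then show ?thesis by (simp add: mult.commute)
qed

lemma norm22: "(norm (v::complex^(2\<times>2)))^2 = (cmod (v$(0,0)))^2 + (cmod (v$(0,1)))^2
   + (cmod (v$(1,0)))^2 + (cmod (v$(1,1)))^2"
  by (simp add: norm_vec_def L2_set_def sum22 sum_nonneg)

lemma mat1_c: "(mat 1 :: complex^2^2) $ 0 $ 0 = 1" "(mat 1 :: complex^2^2) $ 0 $ 1 = 0"
  "(mat 1 :: complex^2^2) $ 1 $ 0 = 0" "(mat 1 :: complex^2^2) $ 1 $ 1 = 1"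
  by (simp_all add: mat_def)

lemma cnorm: "cnj z * z = complex_of_real ((cmod z)^2)"
  by (metis complex_norm_square mult.commute)

lemma part1:
  fixes \<phi> :: "complex^(2\<times>2)"
  assumes n1: "norm \<phi> = 1" shows "part1_conclusion \<phi>"
  unfolding part1_conclusion_def Let_def
proof (intro allI impI, elim conjE)
  fix v1 v2 assume nz: "(v1,v2) \<noteq> (0,0)" and cm: "cols_multiple_of (assoc_mat \<phi>) v1 v2"
  obtain c0 where c0: "\<phi>$(0,0) = c0* v1" "\<phi>$(1,0) = c0* v2"
    using cm[unfolded cols_multiple_of_def assoc_mat_def, rule_format, of 0] by auto
  obtain c1 where c1: "\<phi>$(0,1) = c1* v1" "\<phi>$(1,1) = c1* v2"
    using cm[unfolded cols_multiple_of_def assoc_mat_def, rule_format, of 1] by auto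
  define N where "N = (cmod v1)^2 + (cmod v2)^2"
  have Npos: "N > 0" using nz unfolding N_def
    by (cases "v1 = 0") (auto intro: add_pos_nonneg add_nonneg_pos)
  define n where "n = sqrt N"
  have npos: "n > 0" using Npos by (simp add: n_def)
  have nn: "n * n = N" using Npos by (simp add: n_def)
  have hv: "cnj v1 * v1 + cnj v2 * v2 = complex_of_real N" by (simp add: cnorm N_def)
  have nrm: "N * ((cmod c0)^2 + (cmod c1)^2) = 1"
  proof -
    have "(norm \<phi>)^2 = 1" using n1 by simp
    then show ?thesis unfolding norm22 c0 c1 N_def by (simp add: norm_mult power_mult_distrib algebra_simps)
  qed
  define e0 where "e0 = complex_of_real n * c0"
  define e1 where "e1 = complex_of_real n * c1"
  have "(cmod e0)^2 + (cmod e1)^2 = (n*n) * ((cmod c0)^2 + (cmod c1)^2)" unfolding e0_def e1_def using npos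
    by (simp add: norm_mult power_mult_distrib algebra_simps power2_eq_square)
  then have he: "(cmod e0)^2 + (cmod e1)^2 = 1" using nrm nn by simp
  have "cnj e0 * e0 + cnj e1 * e1 = of_real ((cmod e0)^2 + (cmod e1)^2)" by (simp only: cnorm of_real_add)
  then have hec: "cnj e0 * e0 + cnj e1 * e1 = 1" using he by simp
  have U2: "U (cnj e0) (- e1) = mat2 (cnj e0) (- e1) (cnj e1) e0"
    using he by (simp add: U_def Let_def)
  define s where "s = complex_of_real (1 / n)"
  have U1: "U (cnj v1) (cnj v2) = mat2 (s * cnj v1) (s * cnj v2) (s * (- v2)) (s * v1)"
    by (simp add: U_def Let_def s_def n_def N_def)
  have sN: "s * complex_of_real N = complex_of_real n"
    using npos nn by (simp add: s_def field_simps flip: of_real_mult)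
  have key: "s * cnj v1 * (c * v1) + s * cnj v2 * (c * v2) = complex_of_real n * c" for c
  proof -
    have "s * cnj v1 * (c * v1) + s * cnj v2 * (c * v2) = c * (s * (cnj v1 * v1 + cnj v2 * v2))"
      by (simp add: algebra_simps)
    also have "\<dots> = complex_of_real n * c" unfolding hv sN by simp
    finally show ?thesis .
  qed
  show "\<exists>\<eta>0 \<eta>1. kron (U (cnj v1) (cnj v2)) (mat 1) *v \<phi> = \<eta>0 *s ket 0 0 + \<eta>1 *s ket 0 1 \<and>
                   kron (U (cnj v1) (cnj v2)) (transpose (U (cnj \<eta>0) (- \<eta>1))) *v \<phi> = ket 0 0"
  proof (intro exI conjI)
    show "kron (U (cnj v1) (cnj v2)) (mat 1) *v \<phi> = e0 *s ket 0 0 + e1 *s ket 0 1"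
      unfolding vec22_eq kron_mv U1 mat2_c mat1_c c0 c1
      apply (simp add: ket_c e0_def e1_def key)
      done
    show "kron (U (cnj v1) (cnj v2)) (transpose (U (cnj e0) (- e1))) *v \<phi> = ket 0 0"
      unfolding vec22_eq kron_mv U1 U2 mat2_c transpose_def c0 c1
      apply (simp add: ket_c mat2_c)
    proof
      have "s * cnj v1 * cnj e0 * (c0 * v1) + s * cnj v1 * cnj e1 * (c1 * v1) +
          s * cnj v2 * cnj e0 * (c0 * v2) + s * cnj v2 * cnj e1 * (c1 * v2)
          = cnj e0 * (s * cnj v1 * (c0 * v1) + s * cnj v2 * (c0 * v2))
            + cnj e1 * (s * cnj v1 * (c1 * v1) + s * cnj v2 * (c1 * v2))"
        by (simp add: algebra_simps)
      also have "\<dots> = cnj e0 * e0 + cnj e1 * e1"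
        by (simp only: key e0_def[symmetric] e1_def[symmetric])
      finally show "s * cnj v1 * cnj e0 * (c0 * v1) + s * cnj v1 * cnj e1 * (c1 * v1) +
          s * cnj v2 * cnj e0 * (c0 * v2) + s * cnj v2 * cnj e1 * (c1 * v2) = 1"
        using hec by simp
      have "s * cnj v1 * e0 * (c1 * v1) - s * cnj v1 * e1 * (c0 * v1) -
          s * cnj v2 * e1 * (c0 * v2) + s * cnj v2 * e0 * (c1 * v2)
          = e0 * (s * cnj v1 * (c1 * v1) + s * cnj v2 * (c1 * v2))
            - e1 * (s * cnj v1 * (c0 * v1) + s * cnj v2 * (c0 * v2))"
        by (simp add: algebra_simps)
      also have "\<dots> = e0 * e1 - e1 * e0"
        by (simp only: key e0_def[symmetric] e1_def[symmetric])
      finally show "s * cnj v1 * e0 * (c1 * v1) - s * cnj v1 * e1 * (c0 * v1) -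
          s * cnj v2 * e1 * (c0 * v2) + s * cnj v2 * e0 * (c1 * v2) = 0"
        by simp
    qed
  qed
qed


lemma R1_prop:
  fixes A :: "complex^2^2"
  assumes D: "a*d - b*c \<noteq> 0" and e: "A$0$0 = a" "A$0$1 = b" "A$1$0 = c" "A$1$1 = d"
  shows "\<exists>k. R1 A = U (d - b*k) (cnj c - cnj a * cnj k) \<and>
    c*cnj c + d*cnj d - (cnj a*c + cnj b*d)*cnj k + (a*cnj c + b*cnj d)*k - (a*cnj a + b*cnj b)*k*cnj k = 0"
proof -
  define \<beta> where "\<beta> = a * cnj c + b * cnj d"
  define Na where "Na = (cmod a)\<^sup>2 + (cmod b)\<^sup>2"
  define Nc where "Nc = (cmod c)\<^sup>2 + (cmod d)\<^sup>2"
  have Napos: "Na > 0" unfolding Na_def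
  proof (cases "a = 0")
    case True
    then have "b \<noteq> 0" using D by auto
    then show "(cmod a)\<^sup>2 + (cmod b)\<^sup>2 > 0" by (simp add: add_nonneg_pos)
  next
    case False
    then show "(cmod a)\<^sup>2 + (cmod b)\<^sup>2 > 0" by (simp add: add_pos_nonneg)
  qed
  have Nc0: "Nc \<ge> 0" unfolding Nc_def by simp
  have NaC: "a*cnj a + b*cnj b = complex_of_real Na" unfolding Na_def
    by (metis cnorm mult.commute of_real_add)
  have NcC: "c*cnj c + d*cnj d = complex_of_real Nc" unfolding Nc_def
    by (metis cnorm mult.commute of_real_add)
  have cb: "cnj a*c + cnj b*d = cnj \<beta>" unfolding \<beta>_def by (simp add: mult.commute)
  define k where "k = (if \<beta> = 0
                   then complex_of_real (sqrt (Nc / Na))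
                   else - complex_of_real (sqrt (Nc / ((cmod \<beta>)\<^sup>2 * Na))) * cnj \<beta>)"
  have R: "R1 A = U (d - b*k) (cnj c - cnj a * cnj k)"
    unfolding R1_def Let_def e k_def \<beta>_def Na_def Nc_def ..
  have "complex_of_real Nc - cnj \<beta> * cnj k + \<beta> * k - complex_of_real Na * k * cnj k = 0"
  proof (cases "\<beta> = 0")
    case True
    have "Na * (sqrt (Nc / Na) * sqrt (Nc / Na)) = Nc" using Napos Nc0 by simp
    then have "complex_of_real Na * (complex_of_real (sqrt (Nc / Na)) * complex_of_real (sqrt (Nc / Na)))
      = complex_of_real Nc" by (simp only: of_real_mult[symmetric])
    then show ?thesis using True by (simp add: k_def mult.assoc)
  next
    case False
    define t where "t = sqrt (Nc / ((cmod \<beta>)\<^sup>2 * Na))"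
    have kk: "k = - complex_of_real t * cnj \<beta>" using False by (simp add: k_def t_def)
    have bb: "\<beta> * cnj \<beta> = complex_of_real ((cmod \<beta>)\<^sup>2)"
      by (rule complex_norm_square[symmetric])
    have bpos: "(cmod \<beta>)\<^sup>2 > 0" using False by simp
    have tt: "Na * (t * t) * (cmod \<beta>)\<^sup>2 = Nc" using Napos Nc0 bpos by (simp add: t_def)
    have ck: "cnj k = - complex_of_real t * \<beta>" using kk by simp
    have "complex_of_real Na * k * cnj k = complex_of_real Na * (complex_of_real t * complex_of_real t) * (\<beta> * cnj \<beta>)"
      unfolding ck kk by (simp add: algebra_simps)
    also have "\<dots> = complex_of_real (Na * (t * t) * (cmod \<beta>)\<^sup>2)"
      unfolding bb by (simp only: of_real_mult)
    finally have "complex_of_real Na * k * cnj k = complex_of_real (Na * (t * t) * (cmod \<beta>)\<^sup>2)" .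
    then have "complex_of_real Na * k * cnj k = complex_of_real Nc" using tt by simp
    moreover have "cnj \<beta> * cnj k = \<beta> * k" unfolding kk by (simp add: algebra_simps)
    ultimately show ?thesis by simp
  qed
  then have "c*cnj c + d*cnj d - (cnj a*c + cnj b*d)*cnj k + (a*cnj c + b*cnj d)*k - (a*cnj a + b*cnj b)*k*cnj k = 0"
    unfolding NaC NcC cb \<beta>_def[symmetric] .
  then show ?thesis using R by blast
qed

lemma rowid: "(cmod (p*x - q*cnj y))\<^sup>2 + (cmod (p*y + q*cnj x))\<^sup>2
   = ((cmod p)\<^sup>2 + (cmod q)\<^sup>2) * ((cmod x)\<^sup>2 + (cmod y)\<^sup>2)"
proof -
  have "complex_of_real ((cmod (p*x - q*cnj y))\<^sup>2 + (cmod (p*y + q*cnj x))\<^sup>2)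
     = complex_of_real (((cmod p)\<^sup>2 + (cmod q)\<^sup>2) * ((cmod x)\<^sup>2 + (cmod y)\<^sup>2))"
    unfolding of_real_add of_real_mult complex_norm_square
    by (simp only: complex_cnj_diff complex_cnj_mult complex_cnj_add complex_cnj_cnj) algebra
  then show ?thesis using of_real_eq_iff by blast
qed


lemma part2:
  fixes \<phi> :: "complex^(2\<times>2)"
  assumes n1: "norm \<phi> = 1" and D: "det (assoc_mat \<phi>) \<noteq> 0"
  defines "\<psi> \<equiv> cz *v (kron (mat 1) (transpose (R1 (assoc_mat \<phi>))) *v \<phi>)"
  shows "det (assoc_mat \<psi>) = 0 \<and> norm \<psi> = 1"
proof -
  define a where "a = \<phi>$(0,0)"
  define b where "b = \<phi>$(0,1)"
  define c where "c = \<phi>$(1,0)"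
  define d where "d = \<phi>$(1,1)"
  have Dabcd: "a*d - b*c \<noteq> 0" using D by (simp add: det22 assoc_mat_def a_def b_def c_def d_def)
  obtain k where R: "R1 (assoc_mat \<phi>) = U (d - b*k) (cnj c - cnj a * cnj k)" and
    key: "c*cnj c + d*cnj d - (cnj a*c + cnj b*d)*cnj k + (a*cnj c + b*cnj d)*k - (a*cnj a + b*cnj b)*k*cnj k = 0"
    using R1_prop[OF Dabcd, of "assoc_mat \<phi>"] by (auto simp: assoc_mat_def a_def b_def c_def d_def)
  define x where "x = d - b*k"
  define y where "y = cnj c - cnj a * cnj k"
  have R': "R1 (assoc_mat \<phi>) = U x y" using R by (simp add: x_def y_def)
  have xy: "\<not> (x = 0 \<and> y = 0)"
  proof
    assume h: "x = 0 \<and> y = 0"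
    then have "d = b*k" by (simp add: x_def)
    moreover have "c = a*k"
    proof -
      have "cnj c = cnj (a*k)" using h by (simp add: y_def)
      then show ?thesis by (simp only: complex_cnj_cancel_iff)
    qed
    ultimately have "a*d - b*c = 0" by simp
    then show False using Dabcd by simp
  qed
  define S where "S = (cmod x)\<^sup>2 + (cmod y)\<^sup>2"
  have Spos: "S > 0" unfolding S_def using xy
    by (cases "x = 0") (auto intro: add_pos_nonneg add_nonneg_pos)
  define r where "r = 1 / sqrt S"
  define s where "s = complex_of_real r"
  have rr: "r * r * S = 1" using Spos by (simp add: r_def)
  have UR: "U x y = mat2 (s*x) (s*y) (s*(-cnj y)) (s*cnj x)"
    by (simp add: U_def Let_def s_def r_def S_def)
  have p00: "\<psi>$(0,0) = s*(a*x - b*cnj y)"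
    by (simp add: \<psi>_def cz_mv kron_mv mat1_c R' UR transpose_def mat2_c a_def b_def c_def d_def algebra_simps)
  have p01: "\<psi>$(0,1) = s*(a*y + b*cnj x)"
    by (simp add: \<psi>_def cz_mv kron_mv mat1_c R' UR transpose_def mat2_c a_def b_def c_def d_def algebra_simps)
  have p10: "\<psi>$(1,0) = s*(c*x - d*cnj y)"
    by (simp add: \<psi>_def cz_mv kron_mv mat1_c R' UR transpose_def mat2_c a_def b_def c_def d_def algebra_simps)
  have p11: "\<psi>$(1,1) = - (s*(c*y + d*cnj x))"
    by (simp add: \<psi>_def cz_mv kron_mv mat1_c R' UR transpose_def mat2_c a_def b_def c_def d_def algebra_simps)
  have cx: "cnj x = cnj d - cnj b * cnj k" by (simp add: x_def)
  have cy: "cnj y = c - a * k" by (simp add: y_def)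
  have br: "(a*x - b*cnj y)*(c*y + d*cnj x) + (a*y + b*cnj x)*(c*x - d*cnj y)
    = (a*d - b*c) * (c*cnj c + d*cnj d - (cnj a*c + cnj b*d)*cnj k + (a*cnj c + b*cnj d)*k - (a*cnj a + b*cnj b)*k*cnj k)"
    unfolding cx cy unfolding x_def y_def by algebra
  have "det (assoc_mat \<psi>) = - (s * s) * ((a*x - b*cnj y)*(c*y + d*cnj x) + (a*y + b*cnj x)*(c*x - d*cnj y))"
    unfolding det22 by (simp add: assoc_mat_def p00 p01 p10 p11 algebra_simps)
  then have det0: "det (assoc_mat \<psi>) = 0" unfolding br key by simp
  have "(norm \<psi>)\<^sup>2 = (r*r) * (((cmod (a*x - b*cnj y))\<^sup>2 + (cmod (a*y + b*cnj x))\<^sup>2)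
      + ((cmod (c*x - d*cnj y))\<^sup>2 + (cmod (c*y + d*cnj x))\<^sup>2))"
    unfolding norm22 p00 p01 p10 p11 norm_minus_cancel norm_mult s_def
    by (simp add: power_mult_distrib power2_eq_square algebra_simps)
  also have "\<dots> = (r*r*S) * ((cmod a)\<^sup>2 + (cmod b)\<^sup>2 + (cmod c)\<^sup>2 + (cmod d)\<^sup>2)"
    unfolding rowid S_def by (simp add: algebra_simps)
  also have "\<dots> = (norm \<phi>)\<^sup>2" unfolding rr norm22 a_def b_def c_def d_def by simp
  finally have "(norm \<psi>)\<^sup>2 = 1" using n1 by simp
  then have "norm \<psi> = 1" using norm_ge_zero[of \<psi>] power2_eq_1_iff by (smt (verit))
  with det0 show ?thesis by simp
qed


theorem mainTheorem4:
  fixes \<phi> :: "complex^(2\<times>2)"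
  assumes "norm \<phi> = 1"
  shows "(det (assoc_mat \<phi>) = 0 \<longrightarrow> part1_conclusion \<phi>) \<and>
         (det (assoc_mat \<phi>) \<noteq> 0 \<longrightarrow>
            (let W1 = transpose (R1 (assoc_mat \<phi>));
                 \<psi> = cz *v (kron (mat 1) W1 *v \<phi>)
             in det (assoc_mat \<psi>) = 0 \<and> part1_conclusion \<psi>))"
  using part1[OF assms] part2[OF assms] part1 unfolding Let_def by blast

end
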